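(* Let $q$ be a prime power and $k,\delta,\alpha$ positive integers with $\alpha\ge3$ and $\delta\ge(\alpha-1)(k-1)$. Then, with $q,k,\delta,\alpha$ fixed and $n\to\infty$, $$B_q(n,k,\delta;\alpha)=O\!\left(q^{\left(1+\frac{1}{\lfloor\alpha/2\rfloor}\right)n}\right).$$
   Context: For a prime power $q$, $\mathcal{G}_q(n,k)$ denotes the set of all $k$-dimensional subspaces of $\mathbb{F}_q^n$. An $\alpha$-$(n,k,\delta)_q^c$ covering Grassmannian code is a subset $\mathcal{C}\subseteq\mathcal{G}_q(n,k)$ (no repeated codewords) such that every set of $\alpha$ distinct codewords of $\mathcal{C}$ spans a subspace of $\mathbb{F}_q^n$ of dimension at least $k+\delta$. $B_q(n,k,\delta;\alpha)$ denotes the maximum size of an $\alpha$-$(n,k,\delta)_q^c$ code. The implied constant in $O(\cdot)$ may depend on $q,k,\delta,\alpha$ but not on $n$. *)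

theory Defs
  imports Main "HOL-Library.Function_Algebras" "HOL-Library.Landau_Symbols" "HOL-Library.Cardinality"
begin

text \<open>Vectors of F_q^n are represented as functions nat => 'a vanishing from index n on.\<close>

definition scaleF :: "'a::field \<Rightarrow> (nat \<Rightarrow> 'a) \<Rightarrow> (nat \<Rightarrow> 'a)" where
  "scaleF c v = (\<lambda>i. c * v i)"

definition Fn :: "nat \<Rightarrow> (nat \<Rightarrow> 'a::field) set" where
  "Fn n = {v. \<forall>i\<ge>n. v i = 0}"

definition subspF :: "(nat \<Rightarrow> 'a::field) set \<Rightarrow> bool" where
  "subspF W = module.subspace scaleF W"

definition spanF :: "(nat \<Rightarrow> 'a::field) set \<Rightarrow> (nat \<Rightarrow> 'a) set" where
  "spanF S = module.span scaleF S"

definition dimF :: "(nat \<Rightarrow> 'a::field) set \<Rightarrow> nat" where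
  "dimF S = vector_space.dim scaleF S"

definition Grass :: "nat \<Rightarrow> nat \<Rightarrow> (nat \<Rightarrow> 'a::field) set set" where
  "Grass n k = {W. W \<subseteq> Fn n \<and> subspF W \<and> dimF W = k}"

definition covering_code ::
  "nat \<Rightarrow> nat \<Rightarrow> nat \<Rightarrow> nat \<Rightarrow> (nat \<Rightarrow> 'a::field) set set \<Rightarrow> bool" where
  "covering_code \<alpha> n k \<delta> C \<longleftrightarrow> C \<subseteq> Grass n k \<and>
     (\<forall>S\<subseteq>C. card S = \<alpha> \<longrightarrow> dimF (spanF (\<Union>S)) \<ge> k + \<delta>)"

text \<open>B_q(n,k,delta;alpha), where q = CARD('a).\<close>
definition Bq :: "'a::{field,finite} itself \<Rightarrow> nat \<Rightarrow> nat \<Rightarrow> nat \<Rightarrow> nat \<Rightarrow> nat" where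
  "Bq _ n k \<delta> \<alpha> = Max {card C | C. covering_code \<alpha> n k \<delta> (C :: (nat \<Rightarrow> 'a) set set)}"

end

theory Submission
  imports Defs "HOL-Library.FuncSet" Complex_Main
begin

lemma vsF: "vector_space (scaleF :: 'a::field \<Rightarrow> (nat \<Rightarrow> 'a) \<Rightarrow> (nat \<Rightarrow> 'a))"
  by unfold_locales (auto simp: scaleF_def fun_eq_iff algebra_simps)

lemma LA_bound:
  fixes S :: "(nat \<Rightarrow> 'a::field) set set" and X :: "(nat \<Rightarrow> 'a) set"
  assumes "\<Union>S \<subseteq> spanF X" "finite X"
  shows "dimF (spanF (\<Union>S)) \<le> card X"
proof -
  interpret vector_space "scaleF :: 'a \<Rightarrow> _" by (rule vsF)
  show ?thesis using assms unfolding dimF_def spanF_def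
    by (simp add: dim_le_card)
qed

lemma spanF_mono: "A \<subseteq> B \<Longrightarrow> spanF (A :: (nat \<Rightarrow> 'a::field) set) \<subseteq> spanF B"
proof -
  interpret vector_space "scaleF :: 'a \<Rightarrow> _" by (rule vsF)
  show "A \<subseteq> B \<Longrightarrow> spanF A \<subseteq> spanF B" unfolding spanF_def by (rule span_mono)
qed

lemma spanF_sub: "subspF W \<Longrightarrow> B \<subseteq> W \<Longrightarrow> spanF (B :: (nat \<Rightarrow> 'a::field) set) \<subseteq> W"
proof -
  interpret vector_space "scaleF :: 'a \<Rightarrow> _" by (rule vsF)
  show "subspF W \<Longrightarrow> B \<subseteq> W \<Longrightarrow> spanF B \<subseteq> W" unfolding spanF_def subspF_def
    by (rule span_minimal)
qed

lemma basis_of: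
  fixes W :: "(nat \<Rightarrow> 'a::field) set"
  assumes "dimF W = k" "k \<ge> 1"
  shows "\<exists>B. B \<subseteq> W \<and> W \<subseteq> spanF B \<and> card B = k \<and> finite B"
proof -
  interpret vector_space "scaleF :: 'a \<Rightarrow> _" by (rule vsF)
  obtain B where "B \<subseteq> W" "independent B" "W \<subseteq> span B" "card B = dim W" by (rule basis_exists)
  then show ?thesis using assms unfolding dimF_def spanF_def
    by (metis card.infinite not_one_le_zero)
qed

lemma arith_aux:
  fixes \<alpha> k \<delta> :: nat
  assumes "k \<ge> 2" "\<alpha> \<ge> 1" "\<delta> \<ge> (\<alpha> - 1) * (k - 1)"
  shows "k + \<delta> > \<alpha> + \<alpha> * (k - 2)"
proof -
  obtain k' a where "k = k' + 2" "\<alpha> = a + 1" using assms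
    by (metis add.commute le_add_diff_inverse)
  then show ?thesis using assms(3) by (simp add: algebra_simps)
qed

lemma code_graph:
  fixes C :: "(nat \<Rightarrow> 'a::field) set set"
  assumes cc: "covering_code \<alpha> n k \<delta> C" and k2: "k \<ge> 2" and dl: "\<delta> \<ge> (\<alpha> - 1) * (k - 1)" and a1: "\<alpha> \<ge> 1"
  shows "\<exists>\<phi>. (\<forall>W\<in>C. \<exists>x y. x \<noteq> y \<and> \<phi> W = {x, y}) \<and> \<Union>(\<phi>`C) \<subseteq> (Fn n :: (nat \<Rightarrow> 'a) set)
      \<and> (\<forall>S\<subseteq>C. card S = \<alpha> \<longrightarrow> card (\<Union>(\<phi>`S)) > \<alpha>)"
proof -
  have CG: "C \<subseteq> Grass n k" and cov: "\<forall>S\<subseteq>C. card S = \<alpha> \<longrightarrow> dimF (spanF (\<Union>S)) \<ge> k + \<delta>"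
    using cc unfolding covering_code_def by auto
  have "\<forall>W\<in>C. \<exists>B. B \<subseteq> W \<and> W \<subseteq> spanF B \<and> card B = k \<and> finite B"
  proof
    fix W assume "W \<in> C"
    then have "dimF W = k" using CG unfolding Grass_def by auto
    then show "\<exists>B. B \<subseteq> W \<and> W \<subseteq> spanF B \<and> card B = k \<and> finite B" using basis_of[of W k] k2 by simp
  qed
  then obtain \<beta> where \<beta>: "\<forall>W\<in>C. \<beta> W \<subseteq> W \<and> W \<subseteq> spanF (\<beta> W) \<and> card (\<beta> W) = k \<and> finite (\<beta> W)"
    by metis
  have "\<forall>W\<in>C. \<exists>G. G \<subseteq> \<beta> W \<and> card G = 2"
  proof
    fix W assume "W \<in> C"
    then have "card (\<beta> W) \<ge> 2" using \<beta> k2 by simp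
    then show "\<exists>G. G \<subseteq> \<beta> W \<and> card G = 2" by (meson obtain_subset_with_card_n)
  qed
  then obtain \<gamma> where \<gamma>: "\<forall>W\<in>C. \<gamma> W \<subseteq> \<beta> W \<and> card (\<gamma> W) = 2" by metis
  have A1: "\<forall>W\<in>C. \<exists>x y. x \<noteq> y \<and> \<gamma> W = {x, y}"
  proof
    fix W assume "W \<in> C"
    then have "card (\<gamma> W) = 2" using \<gamma> by blast
    then obtain x y where "\<gamma> W = {x, y}" "x \<noteq> y" unfolding card_2_iff by blast
    then show "\<exists>x y. x \<noteq> y \<and> \<gamma> W = {x, y}" by blast
  qed
  have A2: "\<Union>(\<gamma>`C) \<subseteq> Fn n"
  proof
    fix x assume "x \<in> \<Union>(\<gamma>`C)"
    then obtain W where "W \<in> C" "x \<in> \<gamma> W" by auto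
    then have "x \<in> W" using \<gamma> \<beta> by blast
    then show "x \<in> Fn n" using CG \<open>W \<in> C\<close> unfolding Grass_def by auto
  qed
  have A3: "card (\<Union>(\<gamma>`S)) > \<alpha>" if S: "S \<subseteq> C" "card S = \<alpha>" for S
  proof (rule ccontr)
    assume "\<not> card (\<Union>(\<gamma>`S)) > \<alpha>"
    then have small: "card (\<Union>(\<gamma>`S)) \<le> \<alpha>" by simp
    have finS: "finite S" using S a1 card.infinite by fastforce
    define X where "X = \<Union>(\<gamma>`S) \<union> (\<Union>W\<in>S. \<beta> W - \<gamma> W)"
    have fb: "finite (\<beta> W) \<and> finite (\<gamma> W)" if "W \<in> S" for W
    proof -
      have "W \<in> C" using that S(1) by blast
      then have "finite (\<beta> W)" "\<gamma> W \<subseteq> \<beta> W" using \<beta> \<gamma> by auto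
      then show ?thesis using finite_subset by blast
    qed
    have finX: "finite X" unfolding X_def using finS fb by auto
    have sp: "\<Union>S \<subseteq> spanF X"
    proof
      fix v assume "v \<in> \<Union>S"
      then obtain W where W: "W \<in> S" "v \<in> W" by auto
      have "\<beta> W \<subseteq> X" unfolding X_def using W(1) by blast
      then have "spanF (\<beta> W) \<subseteq> spanF X" by (rule spanF_mono)
      moreover have "W \<subseteq> spanF (\<beta> W)" using \<beta> W(1) S(1) by blast
      ultimately show "v \<in> spanF X" using W(2) by blast
    qed
    have "card X \<le> card (\<Union>(\<gamma>`S)) + card (\<Union>W\<in>S. \<beta> W - \<gamma> W)"
      unfolding X_def by (rule card_Un_le)
    also have "card (\<Union>W\<in>S. \<beta> W - \<gamma> W) \<le> (\<Sum>W\<in>S. card (\<beta> W - \<gamma> W))"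
      by (rule card_UN_le[OF finS])
    also have "(\<Sum>W\<in>S. card (\<beta> W - \<gamma> W)) = (\<Sum>W\<in>S. k - 2)"
    proof (rule sum.cong[OF refl])
      fix W assume "W \<in> S"
      then have "W \<in> C" using S by auto
      then have "finite (\<beta> W)" "\<gamma> W \<subseteq> \<beta> W" "card (\<beta> W) = k" "card (\<gamma> W) = 2" using \<beta> \<gamma> by auto
      moreover then have "finite (\<gamma> W)" using finite_subset by blast
      ultimately show "card (\<beta> W - \<gamma> W) = k - 2" using card_Diff_subset by metis
    qed
    also have "\<dots> = \<alpha> * (k - 2)" using S by simp
    finally have "card X \<le> \<alpha> + \<alpha> * (k - 2)" using small by linarith
    moreover have "dimF (spanF (\<Union>S)) \<le> card X" by (rule LA_bound[OF sp finX])
    moreover have "dimF (spanF (\<Union>S)) \<ge> k + \<delta>" using cov S by blast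
    ultimately show False using arith_aux[OF k2 a1 dl] by linarith
  qed
  have A3': "\<forall>S\<subseteq>C. card S = \<alpha> \<longrightarrow> card (\<Union>(\<gamma>`S)) > \<alpha>" using A3 by simp
  have "(\<forall>W\<in>C. \<exists>x y. x \<noteq> y \<and> \<gamma> W = {x, y}) \<and> \<Union>(\<gamma>`C) \<subseteq> Fn n
      \<and> (\<forall>S\<subseteq>C. card S = \<alpha> \<longrightarrow> card (\<Union>(\<gamma>`S)) > \<alpha>)"
    using A1 A2 A3' by (intro conjI)
  then show ?thesis by (rule exI[of _ \<gamma>])
qed

lemma Fn_finite_card: "finite (Fn n :: (nat \<Rightarrow> 'a::{field,finite}) set) \<and> card (Fn n :: (nat \<Rightarrow> 'a) set) = CARD('a) ^ n"
proof -
  have bij: "bij_betw (\<lambda>v. restrict v {..<n}) (Fn n :: (nat \<Rightarrow> 'a) set) (PiE {..<n} (\<lambda>_. UNIV))"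
  proof (rule bij_betwI[where g = "\<lambda>f i. if i < n then f i else 0"])
    show "(\<lambda>v. restrict v {..<n}) \<in> Fn n \<rightarrow> PiE {..<n} (\<lambda>_. UNIV)" by auto
    show "(\<lambda>f i. if i < n then f i else 0) \<in> PiE {..<n} (\<lambda>_. UNIV) \<rightarrow> (Fn n :: (nat \<Rightarrow> 'a) set)"
      unfolding Fn_def by auto
    show "(\<lambda>i. if i < n then restrict x {..<n} i else 0) = x" if "x \<in> Fn n" for x :: "nat \<Rightarrow> 'a"
      using that unfolding Fn_def by (auto simp: fun_eq_iff)
    show "restrict (\<lambda>i. if i < n then y i else 0) {..<n} = y" if "y \<in> PiE {..<n} (\<lambda>_. (UNIV :: 'a set))" for y
      using that by (auto simp: fun_eq_iff PiE_def extensional_def)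
  qed
  have "card (PiE {..<n} (\<lambda>_. (UNIV :: 'a set))) = CARD('a) ^ n" by (simp add: card_PiE)
  moreover have "finite (PiE {..<n} (\<lambda>_. (UNIV :: 'a set)))" by (simp add: finite_PiE)
  ultimately show ?thesis using bij_betw_finite[OF bij] bij_betw_same_card[OF bij] by simp
qed

lemma prune:
  fixes c :: real and \<phi> :: "'e \<Rightarrow> 'v set"
  assumes "c \<ge> 0" "finite V" "finite C" "\<Union>(\<phi>`C) \<subseteq> V" "real (card C) > c * card V"
  shows "\<exists>C'\<subseteq>C. \<exists>V'\<subseteq>V. C' \<noteq> {} \<and> \<Union>(\<phi>`C') \<subseteq> V' \<and> (\<forall>u\<in>V'. real (card {W\<in>C'. u\<in>\<phi> W}) > c)"
  using assms
proof (induction "card V" arbitrary: V C rule: less_induct)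
  case less
  show ?case
  proof (cases "\<forall>u\<in>V. real (card {W\<in>C. u\<in>\<phi> W}) > c")
    case True
    have "C \<noteq> {}" proof
      assume "C = {}" then show False using less.prems(1,5) using less.prems(1,5) by (metis card.empty not_less of_nat_0 mult_nonneg_nonneg of_nat_0_le_iff)
    qed
    then show ?thesis using True less.prems by blast
  next
    case False
    then obtain u where u: "u \<in> V" "real (card {W\<in>C. u\<in>\<phi> W}) \<le> c" by auto
    define C1 where "C1 = {W\<in>C. u \<notin> \<phi> W}"
    have part: "C = C1 \<union> {W\<in>C. u\<in>\<phi> W}" "C1 \<inter> {W\<in>C. u\<in>\<phi> W} = {}" unfolding C1_def by auto
    have "card C = card C1 + card {W\<in>C. u\<in>\<phi> W}"
      using part less.prems(3) by (metis (no_types, lifting) card_Un_disjoint finite_Un)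
    moreover have "card V = card (V - {u}) + 1" using u less.prems(2)
      using card_Diff1_less by fastforce
    ultimately have "real (card C1) > c * card (V - {u})" using less.prems(5) u(2)
      by (simp add: algebra_simps)
    moreover have "\<Union>(\<phi>`C1) \<subseteq> V - {u}" using less.prems(4) unfolding C1_def by auto
    moreover have "card (V - {u}) < card V" using u less.prems(2) card_gt_0_iff[of V] by auto
    ultimately obtain C' V' where "C' \<subseteq> C1" "V' \<subseteq> V - {u}" "C' \<noteq> {}" "\<Union>(\<phi>`C') \<subseteq> V'"
        "\<forall>u\<in>V'. real (card {W\<in>C'. u\<in>\<phi> W}) > c"
      using less.hyps[of "V - {u}" C1] less.prems unfolding C1_def by auto
    then show ?thesis unfolding C1_def by blast
  qed
qed

lemma edge_inj:
  assumes "inj_on q {..t}" "a < t" "b < t" "{q a, q (Suc a)} = {q b, q (Suc b)}"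
  shows "a = b"
proof -
  have "q a = q b \<or> (q a = q (Suc b) \<and> q (Suc a) = q b)" using assms(4) by (auto simp: doubleton_eq_iff)
  then show ?thesis
  proof
    assume "q a = q b" then show ?thesis using assms(1-3) by (auto dest: inj_onD)
  next
    assume h: "q a = q (Suc b) \<and> q (Suc a) = q b"
    then have "a = Suc b" using assms(1-3) by (auto dest: inj_onD)
    moreover have "Suc a = b" using h assms(1-3) by (auto dest: inj_onD)
    ultimately show ?thesis by simp
  qed
qed

lemma two_paths_card:
  fixes p q :: "nat \<Rightarrow> 'v"
  assumes ip: "inj_on p {..t}" and iq: "inj_on q {..t}" and e0: "p 0 = q 0" and et: "p t = q t"
    and ne: "\<exists>i\<le>t. p i \<noteq> q i"
  shows "card (p`{..t} \<union> q`{..t}) \<le> card ((\<lambda>j. {p j, p (Suc j)})`{..<t} \<union> (\<lambda>j. {q j, q (Suc j)})`{..<t})"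
proof -
  define P where "P = p`{..t}"
  define EP where "EP = (\<lambda>j. {p j, p (Suc j)})`{..<t}"
  define EQ where "EQ = (\<lambda>j. {q j, q (Suc j)})`{..<t}"
  define J where "J = {j. j < t \<and> q (Suc j) \<notin> P}"
  have cP: "card P = Suc t" unfolding P_def using card_image[OF ip] by simp
  have cEP: "card EP = t" unfolding EP_def
    by (subst card_image) (auto intro!: inj_onI edge_inj[OF ip])
  have injq: "inj_on (\<lambda>j. {q j, q (Suc j)}) {..<t}" by (auto intro!: inj_onI edge_inj[OF iq])
  have EPsub: "\<Union>EP \<subseteq> P" unfolding EP_def P_def by auto
  have QJ: "q`{..t} - P = q ` (Suc ` J)"
  proof
    show "q`{..t} - P \<subseteq> q ` (Suc ` J)"
    proof
      fix x assume "x \<in> q`{..t} - P"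
      then obtain j where j: "j \<le> t" "x = q j" "x \<notin> P" by auto
      have "j \<noteq> 0" using j e0 unfolding P_def by (metis atMost_iff image_eqI le0)
      then obtain j' where "j = Suc j'" using not0_implies_Suc by blast
      then show "x \<in> q ` (Suc ` J)" using j unfolding J_def by auto
    qed
  next
    show "q ` (Suc ` J) \<subseteq> q`{..t} - P" unfolding J_def by auto
  qed
  have cQJ: "card (q`{..t} - P) = card J"
    unfolding QJ
    apply (subst card_image)
     apply (rule inj_on_subset[OF iq]) apply (force simp: J_def)
    by (simp add: card_image)
  obtain i where i: "p i \<noteq> q i" "\<forall>i'<i. p i' = q i'" "i \<le> t"
  proof -
    obtain i0 where "i0 \<le> t" "p i0 \<noteq> q i0" using ne by auto
    define i where "i = (LEAST i. p i \<noteq> q i)"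
    have "p i \<noteq> q i" unfolding i_def by (rule LeastI) fact
    moreover have "\<forall>i'<i. p i' = q i'" unfolding i_def using not_less_Least by blast
    moreover have "i \<le> i0" unfolding i_def by (rule Least_le) fact
    ultimately show ?thesis using that \<open>i0 \<le> t\<close> by auto
  qed
  have i0: "i > 0" using i e0 by (cases i) auto
  have it: "i < t" using i et le_neq_implies_less by blast
  define m where "m = (LEAST m. i \<le> m \<and> q m \<in> P)"
  have mP: "i \<le> m \<and> q m \<in> P" unfolding m_def by (rule LeastI[of _ t]) (use it in \<open>auto simp: P_def et[symmetric]\<close>)
  have mmin: "\<And>m'. i \<le> m' \<Longrightarrow> m' < m \<Longrightarrow> q m' \<notin> P" unfolding m_def using not_less_Least by blast
  have mt: "m \<le> t" unfolding m_def by (rule Least_le) (use it in \<open>auto simp: P_def et[symmetric]\<close>)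
  define js where "js = m - 1"
  have jsm: "Suc js = m" using mP i0 unfolding js_def by auto
  have js_t: "js < t" using jsm mt by auto
  have jsJ: "js \<notin> J" unfolding J_def using mP jsm by auto
  have js_notEP: "{q js, q (Suc js)} \<notin> EP"
  proof (cases "i < m")
    case True
    then have "q js \<notin> P" using mmin[of js] jsm by auto
    then show ?thesis using EPsub by auto
  next
    case False
    then have mi: "m = i" using mP by auto
    have qjs: "q js = p js" using i(2) jsm mi by auto
    show ?thesis
    proof
      assume "{q js, q (Suc js)} \<in> EP"
      then obtain a where a: "a < t" "{q js, q (Suc js)} = {p a, p (Suc a)}" unfolding EP_def by auto
      then have "(p js = p a \<and> q i = p (Suc a)) \<or> (p js = p (Suc a) \<and> q i = p a)"
        using qjs jsm mi by (auto simp: doubleton_eq_iff)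
      then show False
      proof
        assume h: "p js = p a \<and> q i = p (Suc a)"
        then have "js = a" using ip a(1) js_t by (auto dest: inj_onD)
        then show False using h i(1) jsm mi by auto
      next
        assume h: "p js = p (Suc a) \<and> q i = p a"
        then have "js = Suc a" using ip a(1) js_t by (auto dest: inj_onD)
        then have "a < i" using jsm mi by auto
        then have "q i = q a" using h i(2) by auto
        then have "i = a" using iq \<open>a < i\<close> it by (auto dest: inj_onD)
        then show False using \<open>a < i\<close> by simp
      qed
    qed
  qed
  have sub: "(\<lambda>j. {q j, q (Suc j)}) ` (insert js J) \<subseteq> EQ - EP"
  proof
    fix e assume "e \<in> (\<lambda>j. {q j, q (Suc j)}) ` (insert js J)"
    then obtain j where j: "j \<in> insert js J" "e = {q j, q (Suc j)}" by auto
    show "e \<in> EQ - EP"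
    proof (cases "j = js")
      case True then show ?thesis using j js_notEP js_t unfolding EQ_def by auto
    next
      case False
      then have "j \<in> J" using j by auto
      then show ?thesis using j EPsub unfolding EQ_def J_def by auto
    qed
  qed
  have fin: "finite J" unfolding J_def by auto
  have "card (insert js J) = Suc (card J)" using jsJ fin by simp
  moreover have "card ((\<lambda>j. {q j, q (Suc j)}) ` (insert js J)) = card (insert js J)"
    by (rule card_image, rule inj_on_subset[OF injq]) (use js_t in \<open>auto simp: J_def\<close>)
  moreover have "card ((\<lambda>j. {q j, q (Suc j)}) ` (insert js J)) \<le> card (EQ - EP)"
    by (rule card_mono) (use sub in \<open>auto simp: EQ_def\<close>)
  ultimately have c1: "Suc (card J) \<le> card (EQ - EP)" by simp
  have "card (P \<union> q`{..t}) = card P + card (q`{..t} - P)"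
    by (metis Un_Diff_cancel card_Un_disjoint Diff_disjoint finite_Diff finite_atMost finite_imageI P_def)
  moreover have "card (EP \<union> EQ) = card EP + card (EQ - EP)"
    by (metis Un_Diff_cancel card_Un_disjoint Diff_disjoint finite_Diff finite_lessThan finite_imageI EP_def EQ_def)
  ultimately show ?thesis using cP cEP cQJ c1 unfolding P_def[symmetric] EP_def[symmetric] EQ_def[symmetric]
    by simp
qed

locale pg =
  fixes C :: "'e set" and \<phi> :: "'e \<Rightarrow> 'v set" and V :: "'v set" and \<alpha> t d :: nat
  assumes finC: "finite C" and finV: "finite V"
    and doub: "\<forall>W\<in>C. \<exists>x y. x \<noteq> y \<and> \<phi> W = {x, y}"
    and vs: "\<Union>(\<phi>`C) \<subseteq> V"
    and degs: "\<forall>u\<in>V. card {W\<in>C. u \<in> \<phi> W} \<ge> d"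
    and d_ge: "d \<ge> \<alpha>"
    and P: "\<forall>S\<subseteq>C. card S = \<alpha> \<longrightarrow> card (\<Union>(\<phi>`S)) > \<alpha>"
    and t1: "t \<ge> 1" and t2: "2 * t \<le> \<alpha>"
begin

lemma doubE:
  assumes "W \<in> C" obtains x y where "x \<noteq> y" "\<phi> W = {x, y}"
  using doub assms by blast

lemma fin_phi: "W \<in> C \<Longrightarrow> finite (\<phi> W)" using doub by auto

lemma pad:
  assumes "E0 \<subseteq> C" "E0 \<noteq> {}" "card E0 \<le> \<alpha>" "card (\<Union>(\<phi>`E0)) \<le> card E0"
  shows False
proof -
  have finE: "finite E0" using assms(1) finC finite_subset by blast
  obtain W0 where "W0 \<in> E0" using assms(2) by auto
  then obtain u where u: "u \<in> \<phi> W0" using doub assms(1) by blast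
  have uV: "u \<in> V" using u \<open>W0 \<in> E0\<close> assms(1) vs by auto
  define A where "A = {W\<in>C. u \<in> \<phi> W} - E0"
  have "card {W\<in>C. u \<in> \<phi> W} \<le> card A + card E0"
  proof -
    have "{W\<in>C. u \<in> \<phi> W} \<subseteq> A \<union> E0" unfolding A_def by blast
    moreover have "finite A" unfolding A_def using finC by simp
    ultimately have "card {W\<in>C. u \<in> \<phi> W} \<le> card (A \<union> E0)" using finE by (intro card_mono) auto
    also have "\<dots> \<le> card A + card E0" by (rule card_Un_le)
    finally show ?thesis .
  qed
  then have "card A \<ge> \<alpha> - card E0" using degs uV d_ge by fastforce
  then obtain A' where A': "A' \<subseteq> A" "card A' = \<alpha> - card E0"
    by (meson obtain_subset_with_card_n)
  have "finite A" unfolding A_def using finC by simp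
  then have finA: "finite A'" using A'(1) finite_subset by blast
  define S where "S = E0 \<union> A'"
  have disj: "E0 \<inter> A' = {}" using A' unfolding A_def by auto
  have cS: "card S = \<alpha>" unfolding S_def using card_Un_disjoint[OF finE finA disj] A' assms(3) by simp
  have SC: "S \<subseteq> C" unfolding S_def using assms(1) A' A_def by auto
  have "\<Union>(\<phi>`S) \<subseteq> \<Union>(\<phi>`E0) \<union> (\<Union>W\<in>A'. \<phi> W - {u})"
    unfolding S_def using u \<open>W0 \<in> E0\<close> by auto
  moreover have "card (\<Union>W\<in>A'. \<phi> W - {u}) \<le> card A'"
  proof -
    have "card (\<Union>W\<in>A'. \<phi> W - {u}) \<le> (\<Sum>W\<in>A'. card (\<phi> W - {u}))" by (rule card_UN_le[OF finA])
    also have "\<dots> \<le> (\<Sum>W\<in>A'. 1)"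
    proof (rule sum_mono)
      fix W assume "W \<in> A'"
      then have "W \<in> C" "u \<in> \<phi> W" using A' A_def by auto
      obtain x y where "x \<noteq> y" "\<phi> W = {x,y}" by (rule doubE[OF \<open>W \<in> C\<close>])
      then show "card (\<phi> W - {u}) \<le> 1" using \<open>u \<in> \<phi> W\<close> by (cases "u = x") (auto simp: insert_Diff_if)
    qed
    finally show ?thesis by simp
  qed
  moreover have "finite (\<Union>(\<phi>`E0))" using finE assms(1) fin_phi by auto
  moreover have "finite (\<Union>W\<in>A'. \<phi> W - {u})" using finA A' A_def fin_phi by auto
  ultimately have "card (\<Union>(\<phi>`S)) \<le> card (\<Union>(\<phi>`E0) \<union> (\<Union>W\<in>A'. \<phi> W - {u}))"
    by (intro card_mono) auto
  also have "\<dots> \<le> card (\<Union>(\<phi>`E0)) + card (\<Union>W\<in>A'. \<phi> W - {u})" by (rule card_Un_le)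
  finally have "card (\<Union>(\<phi>`S)) \<le> card E0 + card A'" using assms(4) \<open>card (\<Union>W\<in>A'. \<phi> W - {u}) \<le> card A'\<close> by linarith
  moreover have "card E0 + card A' = \<alpha>" using A'(2) assms(3) by simp
  moreover have "card (\<Union>(\<phi>`S)) > \<alpha>" using P SC cS by blast
  ultimately show False by linarith
qed

lemma phi_inj: "inj_on \<phi> C"
proof (rule inj_onI, rule ccontr)
  fix W W' assume h: "W \<in> C" "W' \<in> C" "\<phi> W = \<phi> W'" "W \<noteq> W'"
  obtain x y where xy: "x \<noteq> y" "\<phi> W = {x,y}" by (rule doubE[OF h(1)])
  have c2: "card {W, W'} = 2" using h by simp
  have "\<Union>(\<phi>`{W,W'}) = {x,y}" using h xy by auto
  then have c3: "card (\<Union>(\<phi>`{W,W'})) = 2" using xy by simp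
  have "\<alpha> \<ge> 2" using t1 t2 by simp
  show False
  proof (rule pad[of "{W,W'}"])
    show "{W, W'} \<subseteq> C" using h by simp
    show "{W, W'} \<noteq> {}" by simp
    show "card {W, W'} \<le> \<alpha>" using c2 \<open>\<alpha> \<ge> 2\<close> by simp
    show "card (\<Union>(\<phi>`{W,W'})) \<le> card {W, W'}" using c2 c3 by simp
  qed
qed

definition Nb where "Nb u = {w. \<exists>W\<in>C. \<phi> W = {u, w}}"

lemma Nb_V: "Nb u \<subseteq> V" unfolding Nb_def using vs by blast

lemma Nb_self: "u \<notin> Nb u"
proof
  assume "u \<in> Nb u"
  then obtain W where W: "W \<in> C" "\<phi> W = {u}" unfolding Nb_def by auto
  then obtain x y where "x \<noteq> y" "{x,y} = {u}" using doub by metis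
  then show False by blast
qed

lemma Nb_card: assumes "u \<in> V" shows "card (Nb u) \<ge> d"
proof -
  define f where "f W = the_elem (\<phi> W - {u})" for W
  have fW: "\<phi> W = {u, f W}" if "W \<in> C" "u \<in> \<phi> W" for W
  proof -
    have "\<exists>x y. x \<noteq> y \<and> \<phi> W = {x,y}" using doub that(1) by (rule bspec)
    then obtain x y where xy: "x \<noteq> y" "\<phi> W = {x,y}" by blast
    show ?thesis
    proof (cases "u = x")
      case True
      then have "\<phi> W - {u} = {y}" using xy by auto
      then show ?thesis using xy True unfolding f_def by simp
    next
      case False
      then have "u = y" using xy that by auto
      then have "\<phi> W - {u} = {x}" using xy by auto
      then show ?thesis using xy \<open>u = y\<close> unfolding f_def by auto
    qed
  qed
  have inj: "inj_on f {W\<in>C. u \<in> \<phi> W}"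
  proof (rule inj_onI)
    fix W W' assume h: "W \<in> {W\<in>C. u \<in> \<phi> W}" "W' \<in> {W\<in>C. u \<in> \<phi> W}" "f W = f W'"
    have "\<phi> W = {u, f W}" using fW h(1) by blast
    moreover have "\<phi> W' = {u, f W'}" using fW h(2) by blast
    ultimately have "\<phi> W = \<phi> W'" using h(3) by simp
    then show "W = W'" using h inj_onD[OF phi_inj] by auto
  qed
  have sub: "f ` {W\<in>C. u \<in> \<phi> W} \<subseteq> Nb u" unfolding Nb_def using fW by blast
  have fin: "finite (Nb u)" using Nb_V finV finite_subset by blast
  have "card {W\<in>C. u \<in> \<phi> W} \<le> card (Nb u)"
    using card_image[OF inj] card_mono[OF fin sub] by simp
  then show ?thesis using degs assms by fastforce
qed

definition paths where "paths i = {p. (\<forall>j\<le>i. p j \<in> V) \<and> inj_on p {..i} \<and> (\<forall>j<i. p (Suc j) \<in> Nb (p j))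
   \<and> (\<forall>j>i. p j = undefined)}"

lemma paths_finite: "finite (paths i)"
proof -
  have "paths i \<subseteq> (\<lambda>f j. if j \<le> i then f j else undefined) ` (PiE {..i} (\<lambda>_. V))"
  proof
    fix p assume "p \<in> paths i"
    then have "p = (\<lambda>j. if j \<le> i then (restrict p {..i}) j else undefined)" "restrict p {..i} \<in> PiE {..i} (\<lambda>_. V)"
      unfolding paths_def by (auto simp: fun_eq_iff)
    then show "p \<in> (\<lambda>f j. if j \<le> i then f j else undefined) ` (PiE {..i} (\<lambda>_. V))" by blast
  qed
  then show ?thesis using finV by (meson finite_PiE finite_atMost finite_imageI finite_subset)
qed

lemma paths0: "card (paths 0) = card V"
proof -
  have "paths 0 = (\<lambda>u j. if j = 0 then u else undefined) ` V"
  proof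
    show "paths 0 \<subseteq> (\<lambda>u j. if j = 0 then u else undefined) ` V"
    proof
      fix p assume "p \<in> paths 0"
      then have "p = (\<lambda>j. if j = 0 then p 0 else undefined)" "p 0 \<in> V" unfolding paths_def by (auto simp: fun_eq_iff)
      then show "p \<in> (\<lambda>u j. if j = 0 then u else undefined) ` V" by blast
    qed
  next
    show "(\<lambda>u j. if j = 0 then u else undefined) ` V \<subseteq> paths 0" unfolding paths_def by auto
  qed
  moreover have "inj_on (\<lambda>u j. if j = 0 then u else undefined) V"
    by (rule inj_onI) (metis (mono_tags))
  ultimately show ?thesis by (metis card_image)
qed

lemma paths_step: "card (paths (Suc i)) \<ge> (d - i) * card (paths i)"
proof -
  define B where "B p = Nb (p i) - p ` {..i}" for p :: "nat \<Rightarrow> 'v"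
  define g where "g = (\<lambda>(p :: nat \<Rightarrow> 'v, w). p(Suc i := w))"
  have img: "g ` (SIGMA p:paths i. B p) \<subseteq> paths (Suc i)"
  proof
    fix x assume "x \<in> g ` (SIGMA p:paths i. B p)"
    then obtain p w where pw: "p \<in> paths i" "w \<in> B p" "x = p(Suc i := w)" unfolding g_def by auto
    have "\<forall>j\<le>Suc i. x j \<in> V" using pw Nb_V unfolding paths_def B_def by (auto simp: le_Suc_eq)
    moreover have "inj_on x {..Suc i}"
    proof -
      have "x ` {..i} = p ` {..i}" using pw(3) by auto
      moreover have "inj_on x {..i}" using pw unfolding paths_def by (auto simp: inj_on_def)
      moreover have "x (Suc i) \<notin> x ` {..i}" using pw unfolding B_def by auto
      ultimately show ?thesis by (simp add: atMost_Suc)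
    qed
    moreover have "\<forall>j<Suc i. x (Suc j) \<in> Nb (x j)"
      using pw unfolding paths_def B_def by (auto simp: less_Suc_eq)
    moreover have "\<forall>j>Suc i. x j = undefined" using pw unfolding paths_def by auto
    ultimately show "x \<in> paths (Suc i)" unfolding paths_def by blast
  qed
  have inj: "inj_on g (SIGMA p:paths i. B p)"
  proof (rule inj_onI)
    fix a b assume "a \<in> (SIGMA p:paths i. B p)" "b \<in> (SIGMA p:paths i. B p)" "g a = g b"
    then obtain p w p' w' where h: "a = (p,w)" "b = (p',w')" "p \<in> paths i" "p' \<in> paths i"
      "p(Suc i := w) = p'(Suc i := w')" unfolding g_def by auto
    have "w = w'" using h(5) by (metis fun_upd_same)
    moreover have "p = p'"
    proof
      fix j show "p j = p' j"
        using h(3,4) fun_cong[OF h(5), of j] unfolding paths_def by (cases "j = Suc i") auto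
    qed
    ultimately show "a = b" using h by simp
  qed
  have finB: "\<forall>p\<in>paths i. finite (B p)" unfolding B_def using Nb_V finV finite_subset by blast
  have cB: "card (B p) \<ge> d - i" if "p \<in> paths i" for p
  proof -
    have pV: "p i \<in> V" using that unfolding paths_def by auto
    have "Nb (p i) \<inter> p ` {..i} \<subseteq> p ` {..<i}" using Nb_self by (auto simp: atMost_Suc le_less)
    then have "card (Nb (p i) \<inter> p ` {..i}) \<le> i"
      by (metis card_image_le card_lessThan card_mono finite_imageI finite_lessThan le_trans)
    moreover have "card (Nb (p i)) \<le> card (B p) + card (Nb (p i) \<inter> p ` {..i})"
    proof -
      have "Nb (p i) = B p \<union> (Nb (p i) \<inter> p ` {..i})" unfolding B_def by auto
      then show ?thesis by (metis card_Un_le)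
    qed
    ultimately show ?thesis using Nb_card[OF pV] by linarith
  qed
  have "(d - i) * card (paths i) = (\<Sum>p\<in>paths i. d - i)" by simp
  also have "\<dots> \<le> (\<Sum>p\<in>paths i. card (B p))" by (rule sum_mono) (rule cB)
  also have "\<dots> = card (SIGMA p:paths i. B p)" using paths_finite finB by simp
  also have "\<dots> = card (g ` (SIGMA p:paths i. B p))" using inj by (simp add: card_image)
  also have "\<dots> \<le> card (paths (Suc i))" by (rule card_mono[OF paths_finite img])
  finally show ?thesis .
qed

lemma paths_lower: "i \<le> t \<Longrightarrow> card (paths i) \<ge> card V * (d - t) ^ i"
proof (induction i)
  case 0 then show ?case using paths0 by simp
next
  case (Suc i)
  then have "card V * (d - t) ^ i \<le> card (paths i)" by simp
  moreover have "d - t \<le> d - i" using Suc by simp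
  ultimately have le1: "(d - t) * (card V * (d - t) ^ i) \<le> (d - i) * card (paths i)"
    by (intro mult_le_mono)
  have eq1: "card V * (d - t) ^ Suc i = (d - t) * (card V * (d - t) ^ i)" by (simp add: mult.left_commute)
  have "card V * (d - t) ^ Suc i \<le> (d - i) * card (paths i)" using ord_eq_le_trans[OF eq1 le1] .
  then show ?case using paths_step[of i] by linarith
qed

lemma two_paths_eq:
  assumes "p \<in> paths t" "q \<in> paths t" "p 0 = q 0" "p t = q t"
  shows "p = q"
proof (rule ccontr)
  assume "p \<noteq> q"
  have ne: "\<exists>i\<le>t. p i \<noteq> q i"
  proof (rule ccontr)
    assume "\<not> (\<exists>i\<le>t. p i \<noteq> q i)"
    then have "p i = q i" for i using assms(1,2) unfolding paths_def by (cases "i \<le> t") auto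
    then show False using \<open>p \<noteq> q\<close> by auto
  qed
  have ip: "inj_on p {..t}" and iq: "inj_on q {..t}" using assms unfolding paths_def by auto
  define EP where "EP = (\<lambda>j. {p j, p (Suc j)})`{..<t}"
  define EQ where "EQ = (\<lambda>j. {q j, q (Suc j)})`{..<t}"
  define E0 where "E0 = {W\<in>C. \<phi> W \<in> EP \<union> EQ}"
  have real: "EP \<union> EQ \<subseteq> \<phi> ` C"
  proof -
    have "{r j, r (Suc j)} \<in> \<phi> ` C" if "r \<in> paths t" "j < t" for r j
      using that unfolding paths_def Nb_def by force
    then show ?thesis unfolding EP_def EQ_def using assms by blast
  qed
  have imgE0: "\<phi> ` E0 = EP \<union> EQ" unfolding E0_def using real by auto
  have cE0: "card E0 = card (EP \<union> EQ)"
    using imgE0 card_image[OF inj_on_subset[OF phi_inj, of E0]] unfolding E0_def by auto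
  have "\<Union>(\<phi>`E0) = p`{..t} \<union> q`{..t}"
  proof -
    have "\<Union>EP = p`{..t}"
    proof
      show "\<Union>EP \<subseteq> p`{..t}" unfolding EP_def by auto
      show "p`{..t} \<subseteq> \<Union>EP"
      proof
        fix x assume "x \<in> p`{..t}"
        then obtain j where j: "j \<le> t" "x = p j" by auto
        show "x \<in> \<Union>EP"
        proof (cases "j < t")
          case True then show ?thesis using j unfolding EP_def by auto
        next
          case False then have "j = Suc (t - 1)" using j t1 by auto
          then show ?thesis using j t1 unfolding EP_def by (auto intro!: bexI[of _ "t - 1"])
        qed
      qed
    qed
    moreover have "\<Union>EQ = q`{..t}"
    proof
      show "\<Union>EQ \<subseteq> q`{..t}" unfolding EQ_def by auto
      show "q`{..t} \<subseteq> \<Union>EQ"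
      proof
        fix x assume "x \<in> q`{..t}"
        then obtain j where j: "j \<le> t" "x = q j" by auto
        show "x \<in> \<Union>EQ"
        proof (cases "j < t")
          case True then show ?thesis using j unfolding EQ_def by auto
        next
          case False then have "j = Suc (t - 1)" using j t1 by auto
          then show ?thesis using j t1 unfolding EQ_def by (auto intro!: bexI[of _ "t - 1"])
        qed
      qed
    qed
    ultimately show ?thesis using imgE0 by auto
  qed
  then have cV: "card (\<Union>(\<phi>`E0)) \<le> card E0"
    using two_paths_card[OF ip iq assms(3,4) ne] cE0 unfolding EP_def EQ_def by simp
  have "card (EP \<union> EQ) \<le> card EP + card EQ" by (rule card_Un_le)
  also have "\<dots> \<le> t + t" unfolding EP_def EQ_def by (intro add_mono; metis card_image_le card_lessThan finite_lessThan)
  finally have "card E0 \<le> \<alpha>" using cE0 t2 by simp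
  moreover have "E0 \<noteq> {}"
  proof -
    have "0 \<in> {..<t}" using t1 by simp
    then have "EP \<noteq> {}" unfolding EP_def by blast
    then show ?thesis using imgE0 by auto
  qed
  ultimately show False using pad[of E0] cV unfolding E0_def by auto
qed

lemma paths_upper: "card (paths t) \<le> card V * card V"
proof -
  have inj: "inj_on (\<lambda>p. (p 0, p t)) (paths t)"
  proof (rule inj_onI)
    fix p q assume "p \<in> paths t" "q \<in> paths t" "(p 0, p t) = (q 0, q t)"
    then show "p = q" using two_paths_eq[of p q] by simp
  qed
  have sub: "(\<lambda>p. (p 0, p t)) ` paths t \<subseteq> V \<times> V" unfolding paths_def by auto
  have fin: "finite (V \<times> V)" using finV by simp
  have "card (paths t) \<le> card (V \<times> V)"
    using card_image[OF inj] card_mono[OF fin sub] by simp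
  then show ?thesis by (simp add: card_cartesian_product)
qed

theorem main: assumes "V \<noteq> {}" shows "(d - t) ^ t \<le> card V"
proof -
  have "card V * (d - t) ^ t \<le> card V * card V" using order_trans[OF paths_lower[OF order_refl] paths_upper] .
  moreover have "card V > 0" using assms finV by (simp add: card_gt_0_iff)
  ultimately show ?thesis by simp
qed

end

lemma comb_bound:
  fixes C :: "'e set" and \<phi> :: "'e \<Rightarrow> 'v set" and V :: "'v set" and \<alpha> t :: nat
  assumes finC: "finite C" and finV: "finite V"
    and doub: "\<forall>W\<in>C. \<exists>x y. x \<noteq> y \<and> \<phi> W = {x, y}"
    and vs: "\<Union>(\<phi>`C) \<subseteq> V"
    and P: "\<forall>S\<subseteq>C. card S = \<alpha> \<longrightarrow> card (\<Union>(\<phi>`S)) > \<alpha>"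
    and t1: "t \<ge> 1" and t2: "2 * t \<le> \<alpha>"
  shows "real (card C) \<le> (real \<alpha> + real t + real (card V) powr (1 / real t)) * real (card V)"
proof (rule ccontr)
  define N where "N = real (card V)"
  define c where "c = real \<alpha> + real t + N powr (1 / real t)"
  assume "\<not> ?thesis"
  then have gt: "real (card C) > c * real (card V)" unfolding c_def N_def by simp
  have c0: "c \<ge> 0" unfolding c_def by simp
  obtain C' V' where C'V': "C' \<subseteq> C" "V' \<subseteq> V" "C' \<noteq> {}" "\<Union>(\<phi>`C') \<subseteq> V'"
      "\<forall>u\<in>V'. real (card {W\<in>C'. u\<in>\<phi> W}) > c"
    using prune[OF c0 finV finC vs gt] by blast
  define d where "d = nat \<lfloor>c\<rfloor> + 1"
  have dgt: "real d > c"
  proof -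
    have "real (nat \<lfloor>c\<rfloor>) = of_int \<lfloor>c\<rfloor>" using c0 by simp
    moreover have "c < of_int \<lfloor>c\<rfloor> + 1" by (rule real_of_int_floor_add_one_gt)
    moreover have "real d = real (nat \<lfloor>c\<rfloor>) + 1" unfolding d_def by simp
    ultimately show ?thesis by linarith
  qed
  have dle: "d \<le> m" if "real m > c" for m
  proof -
    have "real_of_int \<lfloor>c\<rfloor> \<le> c" by (rule of_int_floor_le)
    then have "real_of_int \<lfloor>c\<rfloor> < real_of_int (int m)" using that by linarith
    then have "\<lfloor>c\<rfloor> < int m" by (simp only: of_int_less_iff)
    moreover have "0 \<le> \<lfloor>c\<rfloor>" using c0 by simp
    ultimately have "int (nat \<lfloor>c\<rfloor>) < int m" by simp
    then have "nat \<lfloor>c\<rfloor> < m" by (simp only: of_nat_less_iff)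
    then show ?thesis unfolding d_def by simp
  qed
  have degs: "\<forall>u\<in>V'. card {W\<in>C'. u \<in> \<phi> W} \<ge> d" using C'V'(5) dle by blast
  have dge: "d \<ge> \<alpha>"
  proof -
    have "real \<alpha> \<le> c" unfolding c_def by simp
    then show ?thesis using dgt by linarith
  qed
  have finC': "finite C'" using C'V'(1) finC finite_subset by blast
  have finV': "finite V'" using C'V'(2) finV finite_subset by blast
  have doub': "\<forall>W\<in>C'. \<exists>x y. x \<noteq> y \<and> \<phi> W = {x, y}" using doub C'V'(1) by blast
  have P': "\<forall>S\<subseteq>C'. card S = \<alpha> \<longrightarrow> card (\<Union>(\<phi>`S)) > \<alpha>" using P C'V'(1) by blast
  interpret pg C' \<phi> V' \<alpha> t d
    by (unfold_locales) (use finC' finV' doub' C'V'(4) degs dge P' t1 t2 in auto)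
  have V'ne: "V' \<noteq> {}"
  proof -
    obtain W where "W \<in> C'" using C'V'(3) by auto
    then obtain x y where "\<phi> W = {x, y}" using doub' by blast
    then show ?thesis using C'V'(4) \<open>W \<in> C'\<close> by blast
  qed
  have m: "(d - t) ^ t \<le> card V'" by (rule main[OF V'ne])
  have "card V' \<le> card V" by (rule card_mono[OF assms(2) C'V'(2)])
  then have m2: "real ((d - t) ^ t) \<le> N" unfolding N_def using m by linarith
  have dt: "d \<ge> t" using dge t2 by linarith
  have "real ((d - t) ^ t) = (real d - real t) ^ t" using dt by (simp add: of_nat_diff)
  moreover have Npos: "N > 0"
  proof -
    have "V \<noteq> {}" using V'ne C'V'(2) by blast
    then have "card V > 0" using assms(2) by (simp add: card_gt_0_iff)
    then show ?thesis unfolding N_def by simp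
  qed
  moreover have "real d - real t > N powr (1 / real t)" using dgt unfolding c_def by simp
  moreover have "(N powr (1 / real t)) ^ t = N"
  proof -
    have "(N powr (1 / real t)) ^ t = (N powr (1 / real t)) powr (real t)"
      using Npos by (simp add: powr_realpow)
    also have "\<dots> = N powr (1 / real t * real t)" by (simp add: powr_powr)
    also have "\<dots> = N" using t1 Npos by simp
    finally show ?thesis .
  qed
  ultimately have "real ((d - t) ^ t) > N"
    by (metis powr_ge_zero power_strict_mono t1 not_one_le_zero neq0_conv)
  then show False using m2 by simp
qed

lemma card_field_ge2: "CARD('a::{field,finite}) \<ge> 2"
proof -
  have "card {0::'a, 1} = 2" by simp
  moreover have "card {0::'a, 1} \<le> CARD('a)" by (rule card_mono) auto
  ultimately show ?thesis by simp
qed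

lemma grass_finite: "finite (Grass n k :: (nat \<Rightarrow> 'a::{field,finite}) set set)"
proof -
  have "Grass n k \<subseteq> Pow (Fn n :: (nat \<Rightarrow> 'a) set)" unfolding Grass_def by auto
  then show ?thesis using Fn_finite_card[where n=n and 'a='a] finite_subset by blast
qed

lemma k1_bound:
  fixes C :: "(nat \<Rightarrow> 'a::{field,finite}) set set"
  assumes "C \<subseteq> Grass n 1"
  shows "card C \<le> card (Fn n :: (nat \<Rightarrow> 'a) set)"
proof -
  have ex: "\<exists>b. b \<in> W \<and> W = spanF {b}" if "W \<in> C" for W
  proof -
    have W: "W \<subseteq> Fn n" "subspF W" "dimF W = 1" using that assms unfolding Grass_def by auto
    obtain B where B: "B \<subseteq> W" "W \<subseteq> spanF B" "card B = 1" using basis_of[OF W(3)] by auto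
    then obtain b where "B = {b}" using card_1_singletonE by blast
    moreover have "spanF B \<subseteq> W" by (rule spanF_sub[OF W(2) B(1)])
    ultimately show ?thesis using B by auto
  qed
  define f where "f W = (SOME b. b \<in> W \<and> W = spanF {b})" for W :: "(nat \<Rightarrow> 'a) set"
  have fW: "f W \<in> W \<and> W = spanF {f W}" if "W \<in> C" for W
    unfolding f_def using someI_ex[OF ex[OF that]] .
  have "inj_on f C"
  proof (rule inj_onI)
    fix W W' assume "W \<in> C" "W' \<in> C" "f W = f W'"
    then show "W = W'" using fW[of W] fW[of W'] by simp
  qed
  moreover have "f ` C \<subseteq> Fn n"
  proof
    fix x assume "x \<in> f ` C"
    then obtain W where "W \<in> C" "x = f W" by auto
    then have "x \<in> W" using fW by blast
    then show "x \<in> Fn n" using \<open>W \<in> C\<close> assms unfolding Grass_def by auto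
  qed
  ultimately show ?thesis using Fn_finite_card[where n=n and 'a='a]
    by (metis card_image card_mono)
qed

lemma code_bound:
  fixes C :: "(nat \<Rightarrow> 'a::{field,finite}) set set" and k \<delta> \<alpha> :: nat
  assumes k1: "k \<ge> 1" and a3: "\<alpha> \<ge> 3" and dl: "\<delta> \<ge> (\<alpha> - 1) * (k - 1)"
    and cc: "covering_code \<alpha> n k \<delta> C"
  shows "real (card C) \<le> (real \<alpha> + real (\<alpha> div 2) + 1) *
      real (CARD('a)) powr ((1 + 1 / real (\<alpha> div 2)) * real n)"
proof -
  define t where "t = \<alpha> div 2"
  have t1: "t \<ge> 1" and t2: "2 * t \<le> \<alpha>" unfolding t_def using a3 by auto
  define q where "q = real (CARD('a))"
  have q2: "q \<ge> 2" unfolding q_def using card_field_ge2[where 'a='a] by simp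
  define Q where "Q = q powr ((1 + 1 / real t) * real n)"
  define N where "N = real (card (Fn n :: (nat \<Rightarrow> 'a) set))"
  have finFn: "finite (Fn n :: (nat \<Rightarrow> 'a) set)" using Fn_finite_card by blast
  have Nq: "N = q powr real n" unfolding N_def q_def using Fn_finite_card[where n=n and 'a='a] q2
    by (simp add: powr_realpow q_def)
  have NQ: "N \<le> Q" unfolding Nq Q_def
    by (rule powr_mono) (use q2 in \<open>auto simp: algebra_simps\<close>)
  have NNQ: "N powr (1 / real t) * N = Q"
  proof -
    have "N powr (1 / real t) * N = q powr (real n * (1 / real t)) * q powr real n"
      unfolding Nq by (simp add: powr_powr)
    also have "\<dots> = q powr (real n * (1 / real t) + real n)" by (simp add: powr_add)
    also have "\<dots> = Q" unfolding Q_def by (simp add: algebra_simps)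
    finally show ?thesis .
  qed
  have Q0: "Q \<ge> 0" unfolding Q_def by simp
  have CG: "C \<subseteq> Grass n k" using cc unfolding covering_code_def by auto
  have "real (card C) \<le> (real \<alpha> + real t + 1) * Q"
  proof (cases "k = 1")
    case True
    then have "card C \<le> card (Fn n :: (nat \<Rightarrow> 'a) set)" using k1_bound CG by blast
    then have "real (card C) \<le> N" unfolding N_def by simp
    also have "\<dots> \<le> Q" by (rule NQ)
    also have "\<dots> \<le> (real \<alpha> + real t + 1) * Q" using Q0 by (simp add: algebra_simps)
    finally show ?thesis .
  next
    case False
    then have k2: "k \<ge> 2" using k1 by simp
    obtain \<phi> where \<phi>: "\<forall>W\<in>C. \<exists>x y. x \<noteq> y \<and> \<phi> W = {x, y}" "\<Union>(\<phi>`C) \<subseteq> (Fn n :: (nat \<Rightarrow> 'a) set)"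
      "\<forall>S\<subseteq>C. card S = \<alpha> \<longrightarrow> card (\<Union>(\<phi>`S)) > \<alpha>"
      using code_graph[OF cc k2 dl] a3 by auto
    have finC: "finite C" using CG grass_finite finite_subset by blast
    have "real (card C) \<le> (real \<alpha> + real t + N powr (1 / real t)) * N"
      unfolding N_def by (rule comb_bound[OF finC finFn \<phi>(1) \<phi>(2) \<phi>(3) t1 t2])
    also have "\<dots> = (real \<alpha> + real t) * N + N powr (1 / real t) * N" by (simp add: algebra_simps)
    also have "\<dots> \<le> (real \<alpha> + real t) * Q + Q" using NQ NNQ by (simp add: mult_left_mono)
    also have "\<dots> = (real \<alpha> + real t + 1) * Q" by (simp add: algebra_simps)
    finally show ?thesis .
  qed
  then show ?thesis unfolding Q_def q_def t_def .
qed

theorem mainTheorem4: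
  fixes k \<delta> \<alpha> :: nat
  assumes "k \<ge> 1" and "\<delta> \<ge> 1" and "\<alpha> \<ge> 3"
    and "\<delta> \<ge> (\<alpha> - 1) * (k - 1)"
  shows "(\<lambda>n. real (Bq TYPE('a::{field,finite}) n k \<delta> \<alpha>))
           \<in> O(\<lambda>n. real (CARD('a)) powr ((1 + 1 / real (\<alpha> div 2)) * real n))"
proof -
  define K where "K = real \<alpha> + real (\<alpha> div 2) + 1"
  have bnd: "real (Bq TYPE('a) n k \<delta> \<alpha>) \<le> K * real (CARD('a)) powr ((1 + 1 / real (\<alpha> div 2)) * real n)" for n
  proof -
    define A where "A = {card C | C. covering_code \<alpha> n k \<delta> (C :: (nat \<Rightarrow> 'a) set set)}"
    have "covering_code \<alpha> n k \<delta> ({} :: (nat \<Rightarrow> 'a) set set)"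
      unfolding covering_code_def using assms(3) by auto
    then have ne: "A \<noteq> {}" unfolding A_def by blast
    have fin: "finite A"
    proof -
      have "A \<subseteq> card ` Pow (Grass n k :: (nat \<Rightarrow> 'a) set set)"
        unfolding A_def covering_code_def by auto
      then show ?thesis using grass_finite finite_subset by blast
    qed
    have "Max A \<in> A" using fin ne by (rule Max_in)
    then obtain C where C: "covering_code \<alpha> n k \<delta> (C :: (nat \<Rightarrow> 'a) set set)" "Max A = card C"
      unfolding A_def by auto
    have "Bq TYPE('a) n k \<delta> \<alpha> = card C" unfolding Bq_def using C(2) A_def by simp
    then show ?thesis using code_bound[OF assms(1) assms(3) assms(4) C(1)] unfolding K_def by simp
  qed
  show ?thesis
  proof (rule bigoI[where c = K])
    show "\<forall>\<^sub>F n in at_top. norm (real (Bq TYPE('a) n k \<delta> \<alpha>))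
        \<le> K * norm (real (CARD('a)) powr ((1 + 1 / real (\<alpha> div 2)) * real n))"
      using bnd by (intro always_eventually allI) simp
  qed
qed

end
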